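(* Let $\mathfrak{g}$ be a symmetric social storage network on $N$ agents with stability point $\hat\eta$, which has evolved from the null network and has $\kappa\ge2$ connected components. Suppose $\hat\eta$ is odd and $N>\hat\eta$. If $\mathfrak{g}$ is bilaterally stable, then at least $\kappa-1$ of its components consist of an even number of agents greater than $\hat\eta$.
   Context: A network is a simple undirected graph on a finite set $\mathbf{A}$ of $N$ agents, and $\eta_i(\mathfrak{g})$ is the degree (neighbourhood size) of $i$. Parameters are: disk failure rate $\lambda\in(0,1)$, per-link cost $c$, data worths $\beta_i>0$, storage $s_i$, data size $d_i$ and budget $b_i$. Remaining storage is $RS_i=s_i-\sum_{j\text{ neighbour of }i}d_j$ and remaining budget is $RB_i=b_i-c\,\eta_i(\mathfrak{g})$. A symmetric social storage network is one of the following four types. (a) SVN with sufficient storage under the Multi-Objective Framework (MO): - $\beta_i=\beta$, with $\beta,\lambda,c\in(0,1)$; - $s_i\ge\sum_{j\ne i}d_j$; - $u_i=\beta(1-\lambda^{\eta_i})-c\eta_i$; - it is assumed that $c<\beta(1-\lambda)$ and $L=|\ln(c/(\beta(1-\lambda)))|/|\ln\lambda|$ is not an integer; the stability point is $\hat\eta=\lceil L\rceil$. (b) SV-SRN under MO: - as in (a) but with $s_i=s$ and $d_i=d$ (with $s/d$ an integer) instead of sufficient storage; - the stability point is $\hat\eta=\min\{\lceil L\rceil,s/d\}$. (c) SVN with sufficient storage and budget under the Single-Objective Framework (SO): - $\beta_i=\beta$; - $s_i\ge\sum_{j\ne i}d_j$ and $b_i\ge c(N-1)$; - $u_i=\beta(1-\lambda^{\eta_i})$;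 - the stability point is $\hat\eta=N-1$. (d) SRN under SO: - $s_i=s$, $d_i=d$, $b_i=b$ (with $s/d$ and $b/c$ integers); - $u_i=\beta_i(1-\lambda^{\eta_i})$; - the stability point is $\hat\eta=\min\{s/d,b/c\}$. Agent $i$ is willing to add the link $\langle ij\rangle$ if $u_i(\mathfrak{g}+\langle ij\rangle)>u_i(\mathfrak{g})$, together with $RS_j\ge d_i$ in types (b) and (d), and additionally $RB_i\ge c$ in type (d). Bilateral stability means both of the following hold. 1. For every link $\langle ij\rangle$: if $u_i(\mathfrak{g}-\langle ij\rangle)>u_i(\mathfrak{g})$, then $u_j(\mathfrak{g}-\langle ij\rangle)<u_j(\mathfrak{g})$. 2. For every non-link $\langle ij\rangle$: if $i$ is willing to add $\langle ij\rangle$, then $j$ is not willing to add it. $\mathfrak{g}$ has evolved from the null network if it is obtained from the network with no links by a finite sequence of single link additions $\langle ij\rangle$, each performed only when both $i$ and $j$ are willing to add it at that moment. *)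

theory Defs
  imports Complex_Main
begin

text \<open>A network on the agent set A is a symmetric irreflexive relation g \<subseteq> A \<times> A;
  the undirected link \<langle>ij\<rangle> is represented by the two pairs (i,j) and (j,i).\<close>

datatype ssn_type = SVN_MO | SV_SRN_MO | SVN_SO | SRN_SO

record 'a ssn_params =
  lam    :: real              \<comment> \<open>disk failure rate \<lambda>\<close>
  cost   :: real
  worth  :: "'a \<Rightarrow> real"
  stor   :: "'a \<Rightarrow> real"
  dsize  :: "'a \<Rightarrow> real"
  budget :: "'a \<Rightarrow> real"

definition add_link :: "('a \<times> 'a) set \<Rightarrow> 'a \<Rightarrow> 'a \<Rightarrow> ('a \<times> 'a) set" where
  "add_link g i j = g \<union> {(i, j), (j, i)}"

definition del_link :: "('a \<times> 'a) set \<Rightarrow> 'a \<Rightarrow> 'a \<Rightarrow> ('a \<times> 'a) set" where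
  "del_link g i j = g - {(i, j), (j, i)}"

definition nbrs :: "('a \<times> 'a) set \<Rightarrow> 'a \<Rightarrow> 'a set" where
  "nbrs g i = {j. (i, j) \<in> g}"

definition deg :: "('a \<times> 'a) set \<Rightarrow> 'a \<Rightarrow> nat" where
  "deg g i = card (nbrs g i)"

fun is_MO :: "ssn_type \<Rightarrow> bool" where
  "is_MO SVN_MO = True"
| "is_MO SV_SRN_MO = True"
| "is_MO SVN_SO = False"
| "is_MO SRN_SO = False"

definition utility :: "ssn_type \<Rightarrow> 'a ssn_params \<Rightarrow> ('a \<times> 'a) set \<Rightarrow> 'a \<Rightarrow> real" where
  "utility T P g i =
     worth P i * (1 - lam P ^ deg g i) - (if is_MO T then cost P * real (deg g i) else 0)"

definition RS :: "'a ssn_params \<Rightarrow> ('a \<times> 'a) set \<Rightarrow> 'a \<Rightarrow> real" where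
  "RS P g i = stor P i - (\<Sum>j\<in>nbrs g i. dsize P j)"

definition RB :: "'a ssn_params \<Rightarrow> ('a \<times> 'a) set \<Rightarrow> 'a \<Rightarrow> real" where
  "RB P g i = budget P i - cost P * real (deg g i)"

definition Lval :: "real \<Rightarrow> real \<Rightarrow> real \<Rightarrow> real" where
  "Lval \<beta> l c = \<bar>ln (c / (\<beta> * (1 - l)))\<bar> / \<bar>ln l\<bar>"

definition symmetric_ssn :: "ssn_type \<Rightarrow> 'a set \<Rightarrow> 'a ssn_params \<Rightarrow> bool" where
  "symmetric_ssn T A P \<longleftrightarrow> finite A \<and> 0 < lam P \<and> lam P < 1 \<and>
    (case T of
       SVN_MO \<Rightarrow> (\<exists>\<beta>. (\<forall>i\<in>A. worth P i = \<beta>) \<and> 0 < \<beta> \<and> \<beta> < 1 \<and>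
                   0 < cost P \<and> cost P < 1 \<and>
                   (\<forall>i\<in>A. stor P i \<ge> (\<Sum>j\<in>A - {i}. dsize P j)) \<and>
                   cost P < \<beta> * (1 - lam P) \<and> Lval \<beta> (lam P) (cost P) \<notin> \<int>)
     | SV_SRN_MO \<Rightarrow> (\<exists>\<beta> s d. (\<forall>i\<in>A. worth P i = \<beta>) \<and> 0 < \<beta> \<and> \<beta> < 1 \<and>
                   0 < cost P \<and> cost P < 1 \<and>
                   (\<forall>i\<in>A. stor P i = s \<and> dsize P i = d) \<and> 0 < d \<and> s / d \<in> \<nat> \<and>
                   cost P < \<beta> * (1 - lam P) \<and> Lval \<beta> (lam P) (cost P) \<notin> \<int>)
     | SVN_SO \<Rightarrow> (\<exists>\<beta>. (\<forall>i\<in>A. worth P i = \<beta>) \<and> 0 < \<beta> \<and>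
                   (\<forall>i\<in>A. stor P i \<ge> (\<Sum>j\<in>A - {i}. dsize P j)) \<and>
                   (\<forall>i\<in>A. budget P i \<ge> cost P * (real (card A) - 1)))
     | SRN_SO \<Rightarrow> (\<exists>s d b. (\<forall>i\<in>A. worth P i > 0) \<and>
                   (\<forall>i\<in>A. stor P i = s \<and> dsize P i = d \<and> budget P i = b) \<and>
                   0 < d \<and> 0 < cost P \<and> s / d \<in> \<nat> \<and> b / cost P \<in> \<nat>))"

text \<open>Stability point \<eta>-hat (common values s, d, b, \<beta> read off at some agent of A).\<close>
definition stability_point :: "ssn_type \<Rightarrow> 'a set \<Rightarrow> 'a ssn_params \<Rightarrow> nat" where
  "stability_point T A P =
    (let i0 = (SOME i. i \<in> A);
         \<beta> = worth P i0; s = stor P i0; d = dsize P i0; b = budget P i0;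
         Lc = nat \<lceil>Lval \<beta> (lam P) (cost P)\<rceil>
     in case T of
          SVN_MO \<Rightarrow> Lc
        | SV_SRN_MO \<Rightarrow> min Lc (nat \<lfloor>s / d\<rfloor>)
        | SVN_SO \<Rightarrow> card A - 1
        | SRN_SO \<Rightarrow> min (nat \<lfloor>s / d\<rfloor>) (nat \<lfloor>b / cost P\<rfloor>))"

definition willing :: "ssn_type \<Rightarrow> 'a ssn_params \<Rightarrow> ('a \<times> 'a) set \<Rightarrow> 'a \<Rightarrow> 'a \<Rightarrow> bool" where
  "willing T P g i j \<longleftrightarrow>
     utility T P (add_link g i j) i > utility T P g i \<and>
     (T \<in> {SV_SRN_MO, SRN_SO} \<longrightarrow> RS P g j \<ge> dsize P i) \<and>
     (T = SRN_SO \<longrightarrow> RB P g i \<ge> cost P)"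

definition bilaterally_stable :: "ssn_type \<Rightarrow> 'a set \<Rightarrow> 'a ssn_params \<Rightarrow> ('a \<times> 'a) set \<Rightarrow> bool" where
  "bilaterally_stable T A P g \<longleftrightarrow>
     (\<forall>i j. (i, j) \<in> g \<longrightarrow>
        utility T P (del_link g i j) i > utility T P g i \<longrightarrow>
        utility T P (del_link g i j) j < utility T P g j) \<and>
     (\<forall>i\<in>A. \<forall>j\<in>A. i \<noteq> j \<longrightarrow> (i, j) \<notin> g \<longrightarrow>
        willing T P g i j \<longrightarrow> \<not> willing T P g j i)"

inductive evolved :: "ssn_type \<Rightarrow> 'a set \<Rightarrow> 'a ssn_params \<Rightarrow> ('a \<times> 'a) set \<Rightarrow> bool"
  for T A P where
  null: "evolved T A P {}"
| step: "\<lbrakk>evolved T A P g; i \<in> A; j \<in> A; i \<noteq> j; (i, j) \<notin> g;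
          willing T P g i j; willing T P g j i\<rbrakk> \<Longrightarrow> evolved T A P (add_link g i j)"

definition components :: "'a set \<Rightarrow> ('a \<times> 'a) set \<Rightarrow> 'a set set" where
  "components A g = (\<lambda>i. {j \<in> A. (i, j) \<in> g\<^sup>*}) ` A"

end

theory Submission
  imports Defs
begin


lemma mo_step:
  fixes b l c :: real and k :: nat
  assumes "0<b" "0<l" "l<1" "0<c" "c<b*(1-l)"
  shows "b*(1-l^Suc k) - c*real(Suc k) > b*(1-l^k) - c*real k \<longleftrightarrow> k < nat \<lceil>Lval b l c\<rceil>"
proof -
  define r where "r = c / (b*(1-l))"
  have bl: "b*(1-l) > 0" using assms by simp
  have r0: "0 < r" "r < 1" using assms bl by (auto simp: r_def field_simps)
  have lnl: "ln l < 0" using assms by simp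
  have lnr: "ln r < 0" using r0 by simp
  have "b*(1-l^Suc k) - c*real(Suc k) > b*(1-l^k) - c*real k \<longleftrightarrow> b*(1-l)*l^k > c" by (simp add: algebra_simps)
  also have "\<dots> \<longleftrightarrow> l^k > r" using bl by (simp add: r_def pos_divide_less_eq mult.commute)
  also have "\<dots> \<longleftrightarrow> ln r < ln (l^k)" using r0 assms by simp
  also have "\<dots> \<longleftrightarrow> ln r < real k * ln l" using assms by (simp add: ln_realpow)
  also have "\<dots> \<longleftrightarrow> real k < ln r / ln l" using lnl by (simp add: neg_less_divide_eq)
  also have "ln r / ln l = Lval b l c" using lnl lnr by (simp add: Lval_def r_def)
  also have "real k < Lval b l c \<longleftrightarrow> k < nat \<lceil>Lval b l c\<rceil>"
  proof -
    have "k < nat \<lceil>Lval b l c\<rceil> \<longleftrightarrow> int k < \<lceil>Lval b l c\<rceil>" by linarith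
    also have "\<dots> \<longleftrightarrow> \<not> (\<lceil>Lval b l c\<rceil> \<le> int k)" by linarith
    also have "\<dots> \<longleftrightarrow> \<not> (Lval b l c \<le> real k)" by (simp add: ceiling_le_iff)
    finally show ?thesis by linarith
  qed
  finally show ?thesis .
qed



lemma so_step:
  fixes b l :: real assumes "0<b" "0<l" "l<1"
  shows "b*(1-l^Suc k) > b*(1-l^k)"
proof -
  have "l^Suc k < l^k" using assms by simp
  thus ?thesis using assms by simp
qed

lemma nbrs_add: "i \<noteq> j \<Longrightarrow> nbrs (add_link g i j) k =
   (if k = i then insert j (nbrs g k) else if k = j then insert i (nbrs g k) else nbrs g k)"
  by (auto simp: add_link_def nbrs_def)

lemma finite_nbrs: "finite g \<Longrightarrow> finite (nbrs g i)"
proof -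
  assume "finite g"
  moreover have "nbrs g i \<subseteq> snd ` g" by (force simp: nbrs_def)
  ultimately show ?thesis by (meson finite_imageI finite_subset)
qed

lemma deg_add_i: assumes "i\<noteq>j" "(i,j)\<notin>g" "finite g"
  shows "deg (add_link g i j) i = Suc (deg g i)"
proof -
  have "j \<notin> nbrs g i" using assms by (simp add: nbrs_def)
  thus ?thesis using assms finite_nbrs[OF assms(3)] by (simp add: deg_def nbrs_add)
qed

lemma add_link_sym: "add_link g i j = add_link g j i" by (auto simp: add_link_def)

lemma deg_add_other: "i\<noteq>j \<Longrightarrow> k\<noteq>i \<Longrightarrow> k\<noteq>j \<Longrightarrow> deg (add_link g i j) k = deg g k"
  by (simp add: deg_def nbrs_add)

lemma RS_const: assumes "g \<subseteq> A\<times>A" "\<forall>k\<in>A. dsize P k = d"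
  shows "RS P g j = stor P j - d * real (deg g j)"
proof -
  have "nbrs g j \<subseteq> A" using assms(1) by (auto simp: nbrs_def)
  hence "(\<Sum>k\<in>nbrs g j. dsize P k) = (\<Sum>k\<in>nbrs g j. d)" by (intro sum.cong) (use assms in auto)
  thus ?thesis by (simp add: RS_def deg_def mult.commute)
qed

lemma nat_div_lt:
  fixes s d :: real and m n :: nat
  assumes "0 < d" "s / d = real m"
  shows "s - d * real n \<ge> d \<longleftrightarrow> n < m"
proof -
  have s: "s = d * real m" using assms by (simp add: field_simps)
  have "s - d * real n \<ge> d \<longleftrightarrow> d * (real n + 1) \<le> d * real m" by (simp add: s algebra_simps)
  also have "\<dots> \<longleftrightarrow> real n + 1 \<le> real m" using assms(1) by simp
  finally show ?thesis by linarith
qed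

lemma deg_lt_card:
  assumes "finite A" "g \<subseteq> A\<times>A" "i\<in>A" "j\<in>A" "i\<noteq>j" "(i,j)\<notin>g" "\<forall>x. (x,x)\<notin>g"
  shows "deg g i < card A - 1"
proof -
  have "insert i (insert j (nbrs g i)) \<subseteq> A" using assms by (auto simp: nbrs_def)
  moreover have "i \<notin> nbrs g i" "j \<notin> nbrs g i" using assms by (auto simp: nbrs_def)
  moreover have "finite (nbrs g i)" using assms(1,2) by (meson finite_subset finite_nbrs finite_SigmaI)
  ultimately have "Suc (Suc (deg g i)) \<le> card A" using assms unfolding deg_def
    by (metis card_insert_disjoint card_mono finite_insert insert_iff)
  thus ?thesis by linarith
qed



lemma willing_char:
  assumes ssn: "symmetric_ssn T A P" and fg: "finite g" and gA: "g \<subseteq> A\<times>A" and sg: "sym g"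
    and irr: "\<forall>x. (x,x)\<notin>g"
    and ij: "i\<in>A" "j\<in>A" "i\<noteq>j" "(i,j)\<notin>g"
  shows "willing T P g i j \<and> willing T P g j i \<longleftrightarrow>
         deg g i < stability_point T A P \<and> deg g j < stability_point T A P"
proof -
  have ji: "(j,i) \<notin> g" using sg ij by (auto dest: symD)
  have di: "deg (add_link g i j) i = Suc (deg g i)" using deg_add_i[OF ij(3,4) fg] .
  have dj: "deg (add_link g j i) j = Suc (deg g j)" using deg_add_i[of j i g] ij(3) ji fg by simp
  define i0 where "i0 = (SOME i. i \<in> A)"
  have i0: "i0 \<in> A" unfolding i0_def using someI[of "\<lambda>i. i\<in>A" i] ij(1) .
  have finA: "finite A" and l: "0 < lam P" "lam P < 1" using ssn by (auto simp: symmetric_ssn_def)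
  show ?thesis
  proof (cases T)
    case SVN_MO
    then obtain b where b: "\<forall>i\<in>A. worth P i = b" "0<b" "0 < cost P" "cost P < b * (1 - lam P)"
      using ssn by (auto simp: symmetric_ssn_def)
    have sp: "stability_point T A P = nat \<lceil>Lval b (lam P) (cost P)\<rceil>"
      using SVN_MO b i0 by (simp add: stability_point_def i0_def[symmetric] Let_def)
    have "willing T P g i j \<longleftrightarrow> deg g i < nat \<lceil>Lval b (lam P) (cost P)\<rceil>"
      using mo_step[OF b(2) l b(3,4), of "deg g i"] SVN_MO di b ij
      by (simp add: willing_def utility_def)
    moreover have "willing T P g j i \<longleftrightarrow> deg g j < nat \<lceil>Lval b (lam P) (cost P)\<rceil>"
      using mo_step[OF b(2) l b(3,4), of "deg g j"] SVN_MO dj b ij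
      by (simp add: willing_def utility_def)
    ultimately show ?thesis using sp by simp
  next
    case SV_SRN_MO
    then obtain b s d m where b: "\<forall>i\<in>A. worth P i = b" "0<b" "0 < cost P" "cost P < b * (1 - lam P)"
      "\<forall>i\<in>A. stor P i = s \<and> dsize P i = d" "0 < d" "s / d = real m"
      using ssn by (auto simp: symmetric_ssn_def elim!: Nats_cases)
    have sp: "stability_point T A P = min (nat \<lceil>Lval b (lam P) (cost P)\<rceil>) m"
      using SV_SRN_MO b i0 by (simp add: stability_point_def i0_def[symmetric] Let_def)
    have rs: "RS P g k = s - d * real (deg g k)" if "k \<in> A" for k
      using RS_const[OF gA, of P d k] b that by auto
    have "willing T P g i j \<longleftrightarrow> deg g i < nat \<lceil>Lval b (lam P) (cost P)\<rceil> \<and> deg g j < m"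
      using mo_step[OF b(2) l b(3,4), of "deg g i"] SV_SRN_MO di b ij rs[of j]
        nat_div_lt[OF b(6,7), of "deg g j"]
      by (simp add: willing_def utility_def)
    moreover have "willing T P g j i \<longleftrightarrow> deg g j < nat \<lceil>Lval b (lam P) (cost P)\<rceil> \<and> deg g i < m"
      using mo_step[OF b(2) l b(3,4), of "deg g j"] SV_SRN_MO dj b ij rs[of i]
        nat_div_lt[OF b(6,7), of "deg g i"]
      by (simp add: willing_def utility_def)
    ultimately show ?thesis using sp by auto
  next
    case SVN_SO
    then obtain b where b: "\<forall>i\<in>A. worth P i = b" "0<b"
      using ssn by (auto simp: symmetric_ssn_def)
    have sp: "stability_point T A P = card A - 1"
      using SVN_SO by (simp add: stability_point_def Let_def)
    have "willing T P g i j" using so_step[OF b(2) l, of "deg g i"] SVN_SO di b ij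
      by (simp add: willing_def utility_def)
    moreover have "willing T P g j i" using so_step[OF b(2) l, of "deg g j"] SVN_SO dj b ij
      by (simp add: willing_def utility_def)
    moreover have "deg g i < card A - 1" using deg_lt_card[OF finA gA ij irr] .
    moreover have "deg g j < card A - 1" using deg_lt_card[OF finA gA ij(2,1) _ ji irr] ij by auto
    ultimately show ?thesis using sp by simp
  next
    case SRN_SO
    then obtain s d bb where b0: "\<forall>i\<in>A. worth P i > 0"
      "\<forall>i\<in>A. stor P i = s \<and> dsize P i = d \<and> budget P i = bb" "0 < d" "0 < cost P"
      "s / d \<in> \<nat>" "bb / cost P \<in> \<nat>"
      using ssn by (simp add: symmetric_ssn_def) blast
    obtain m where m: "s / d = real m" using b0(5) by (auto elim!: Nats_cases)
    obtain m' where m': "bb / cost P = real m'" using b0(6) by (auto elim!: Nats_cases)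
    note b = b0(1-4) m m'
    have sp: "stability_point T A P = min m m'"
      using SRN_SO b i0 by (simp add: stability_point_def i0_def[symmetric] Let_def)
    have rs: "RS P g k = s - d * real (deg g k)" if "k \<in> A" for k
      using RS_const[OF gA, of P d k] b that by auto
    have rb: "RB P g k = bb - cost P * real (deg g k)" if "k \<in> A" for k
      using b that by (simp add: RB_def)
    have "willing T P g i j \<longleftrightarrow> deg g j < m \<and> deg g i < m'"
      using so_step[OF _ l, of "worth P i" "deg g i"] SRN_SO di b ij rs[of j] rb[of i]
        nat_div_lt[OF b(3,5), of "deg g j"] nat_div_lt[OF b(4,6), of "deg g i"]
      by (simp add: willing_def utility_def)
    moreover have "willing T P g j i \<longleftrightarrow> deg g i < m \<and> deg g j < m'"
      using so_step[OF _ l, of "worth P j" "deg g j"] SRN_SO dj b ij rs[of i] rb[of j]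
        nat_div_lt[OF b(3,5), of "deg g i"] nat_div_lt[OF b(4,6), of "deg g j"]
      by (simp add: willing_def utility_def)
    ultimately show ?thesis using sp by auto
  qed
qed




lemma evolved_inv:
  assumes "evolved T A P g" "symmetric_ssn T A P"
  shows "finite g \<and> g \<subseteq> A\<times>A \<and> sym g \<and> (\<forall>x. (x,x)\<notin>g) \<and> (\<forall>k\<in>A. deg g k \<le> stability_point T A P)"
  using assms
proof induction
  case null
  then show ?case by (simp add: deg_def nbrs_def sym_def)
next
  case (step g i j)
  then have IH: "finite g" "g \<subseteq> A\<times>A" "sym g" "\<forall>x. (x,x)\<notin>g" "\<forall>k\<in>A. deg g k \<le> stability_point T A P"
    by auto
  have lt: "deg g i < stability_point T A P \<and> deg g j < stability_point T A P"
    using willing_char[OF step(9) IH(1-4) step(2-5)] step(6,7) by blast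
  have ji: "(j,i) \<notin> g" using IH(3) step(5) by (auto dest: symD)
  have "deg (add_link g i j) k \<le> stability_point T A P" if "k\<in>A" for k
  proof -
    consider "k = i" | "k = j" | "k \<noteq> i \<and> k \<noteq> j" by blast
    then show ?thesis
    proof cases
      case 1 then show ?thesis using deg_add_i[OF step(4,5) IH(1)] lt by simp
    next
      case 2 then show ?thesis using deg_add_i[of j i g] ji step(4) IH(1) lt add_link_sym[of g i j] by simp
    next
      case 3 then show ?thesis using deg_add_other[OF step(4)] IH(5) that by auto
    qed
  qed
  moreover have "finite (add_link g i j)" using IH(1) by (simp add: add_link_def)
  moreover have "add_link g i j \<subseteq> A\<times>A" using IH(2) step(2,3) by (auto simp: add_link_def)
  moreover have "sym (add_link g i j)" using IH(3) by (auto simp: add_link_def sym_def)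
  moreover have "\<forall>x. (x,x) \<notin> add_link g i j" using IH(4) step(4) by (auto simp: add_link_def)
  ultimately show ?case by blast
qed

lemma even_sym_irrefl: "finite R \<Longrightarrow> sym R \<Longrightarrow> \<forall>x. (x,x)\<notin>R \<Longrightarrow> even (card R)"
proof (induction "card R" arbitrary: R rule: less_induct)
  case less
  show ?case
  proof (cases "R = {}")
    case True then show ?thesis by simp
  next
    case False
    then obtain a b where ab: "(a,b) \<in> R" by auto
    have ba: "(b,a) \<in> R" using ab less.prems(2) by (auto dest: symD)
    have neq: "a \<noteq> b" using ab less.prems(3) by auto
    let ?R = "R - {(a,b),(b,a)}"
    have c2: "card {(a,b),(b,a)} = 2" using neq by simp
    have cR: "card ?R = card R - 2" using card_Diff_subset[of "{(a,b),(b,a)}" R] ab ba c2 by simp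
    have ge: "card R \<ge> 2" using card_mono[OF less.prems(1), of "{(a,b),(b,a)}"] ab ba c2 by simp
    have "even (card ?R)"
      apply (rule less.hyps)
      using cR ge less.prems by (auto simp: sym_def)
    then show ?thesis using cR ge by (metis add_diff_inverse_nat even_add le_less_trans less_irrefl_nat dvd_refl nat_diff_split odd_numeral
      numeral_le_iff semiring_norm(69) not_less)
  qed
qed

lemma comp_good:
  assumes fA: "finite A" and gA: "g \<subseteq> A\<times>A" and sg: "sym g" and irr: "\<forall>x. (x,x)\<notin>g"
    and fg: "finite g" and iA: "i\<in>A" and X: "X = {j\<in>A. (i,j)\<in>g\<^sup>*}"
    and dX: "\<forall>k\<in>X. deg g k = \<eta>" and odd: "odd \<eta>"
  shows "even (card X) \<and> card X > \<eta>"
proof -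
  have cl: "l \<in> X" if "k \<in> X" "(k,l) \<in> g" for k l
    using that gA X by (auto intro: rtrancl_into_rtrancl)
  have fX: "finite X" using fA X by simp
  have iX: "i \<in> X" using X iA by simp
  have RR: "Sigma X (nbrs g) = g \<inter> (X\<times>X)" using cl by (auto simp: nbrs_def)
  have "card (Sigma X (nbrs g)) = (\<Sum>k\<in>X. card (nbrs g k))"
    using card_SigmaI[OF fX] finite_nbrs[OF fg] by blast
  also have "\<dots> = (\<Sum>k\<in>X. \<eta>)" using dX by (simp add: deg_def)
  finally have cS: "card (g \<inter> (X\<times>X)) = \<eta> * card X" using RR by simp
  have "even (card (g \<inter> (X\<times>X)))"
    apply (rule even_sym_irrefl)
    using fg sg irr by (auto simp: sym_def)
  hence ev: "even (card X)" using cS odd by simp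
  have "insert i (nbrs g i) \<subseteq> X" using iX cl by (auto simp: nbrs_def)
  moreover have "i \<notin> nbrs g i" using irr by (simp add: nbrs_def)
  ultimately have "Suc (deg g i) \<le> card X" using fX finite_nbrs[OF fg]
    by (metis card_insert_disjoint card_mono deg_def)
  hence "card X > \<eta>" using dX iX by simp
  with ev show ?thesis by simp
qed




theorem corollary4:
  fixes T :: ssn_type and A :: "'a set" and P :: "'a ssn_params" and g :: "('a \<times> 'a) set"
  assumes "symmetric_ssn T A P"
    and "evolved T A P g"
    and "card (components A g) \<ge> 2"
    and "odd (stability_point T A P)"
    and "card A > stability_point T A P"
    and "bilaterally_stable T A P g"
  shows "\<exists>C \<subseteq> components A g. card C \<ge> card (components A g) - 1 \<and>
           (\<forall>X\<in>C. even (card X) \<and> card X > stability_point T A P)"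
proof -
  define \<eta> where "\<eta> = stability_point T A P"
  have inv: "finite g" "g \<subseteq> A\<times>A" "sym g" "\<forall>x. (x,x)\<notin>g" "\<forall>k\<in>A. deg g k \<le> \<eta>"
    using evolved_inv[OF assms(2,1)] unfolding \<eta>_def by auto
  have fA: "finite A" using assms(1) by (simp add: symmetric_ssn_def)
  have stab: "\<not> (deg g i < \<eta> \<and> deg g j < \<eta>)"
    if "i\<in>A" "j\<in>A" "i\<noteq>j" "(i,j)\<notin>g" for i j
    using willing_char[OF assms(1) inv(1-4) that] assms(6) that
    unfolding bilaterally_stable_def \<eta>_def by blast
  define comp where "comp i = {j\<in>A. (i,j)\<in>g\<^sup>*}" for i
  have cA: "components A g = comp ` A" by (simp add: components_def comp_def)
  have symr: "sym (g\<^sup>*)" using inv(3) by (simp add: sym_rtrancl)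
  have ceq: "comp i = comp j" if "(i,j) \<in> g\<^sup>*" for i j
  proof -
    have "(j,i) \<in> g\<^sup>*" using symr that by (auto dest: symD)
    thus ?thesis using that unfolding comp_def by (meson rtrancl_trans)
  qed
  have good: "even (card X) \<and> card X > \<eta>"
    if "i \<in> A" "X = comp i" "\<forall>k\<in>X. deg g k = \<eta>" for i X
    using comp_good[OF fA inv(2,3,4,1) that(1) _ that(3)] that(2) assms(4)
    unfolding comp_def \<eta>_def by blast
  have finC: "finite (components A g)" using fA cA by simp
  show ?thesis
  proof (cases "\<exists>i0\<in>A. deg g i0 < \<eta>")
    case False
    have "\<forall>X\<in>components A g. even (card X) \<and> card X > \<eta>"
    proof
      fix X assume "X \<in> components A g"
      then obtain i where i: "i\<in>A" "X = comp i" using cA by auto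
      have "\<forall>k\<in>X. deg g k = \<eta>" using False inv(5) i unfolding comp_def by force
      thus "even (card X) \<and> card X > \<eta>" using good i by blast
    qed
    thus ?thesis unfolding \<eta>_def by (intro exI[of _ "components A g"]) simp
  next
    case True
    then obtain i0 where i0: "i0 \<in> A" "deg g i0 < \<eta>" by blast
    define C where "C = components A g - {comp i0}"
    have "comp i0 \<in> components A g" using cA i0 by simp
    hence cardC: "card C = card (components A g) - 1" unfolding C_def using finC by simp
    have "\<forall>X\<in>C. even (card X) \<and> card X > \<eta>"
    proof
      fix X assume XC: "X \<in> C"
      then obtain i where i: "i\<in>A" "X = comp i" "comp i \<noteq> comp i0" using cA C_def by auto
      have "deg g k = \<eta>" if kX: "k \<in> X" for k
      proof (rule ccontr)
        assume ne: "deg g k \<noteq> \<eta>"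
        have kA: "k \<in> A" and ik: "(i,k) \<in> g\<^sup>*" using kX i unfolding comp_def by auto
        have lt: "deg g k < \<eta>" using ne inv(5) kA by (meson le_neq_implies_less)
        have "(k,i0) \<in> g\<^sup>*"
        proof (cases "k = i0")
          case True then show ?thesis by simp
        next
          case False
          hence "(k,i0) \<in> g" using stab[OF kA i0(1) False] lt i0(2) by blast
          thus ?thesis by simp
        qed
        hence "(i,i0) \<in> g\<^sup>*" using ik by (meson rtrancl_trans)
        thus False using ceq i(3) by blast
      qed
      thus "even (card X) \<and> card X > \<eta>" using good i by blast
    qed
    moreover have "C \<subseteq> components A g" unfolding C_def by blast
    ultimately show ?thesis using cardC unfolding \<eta>_def by (intro exI[of _ C]) simp
  qed
qed


end
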